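(* If $X$ is path connected and $\pi_1^{\tau}(X)$ is Hausdorff, then $X$ is homotopically path-Hausdorff.
   Context: A space $X$ is homotopically path-Hausdorff if for any paths $\alpha,\beta:[0,1]\to X$ with $\alpha(0)=\beta(0)$, $\alpha(1)=\beta(1)$ which are not homotopic rel. endpoints, there exist a partition $0=t_0<t_1<\dots<t_k=1$ and open sets $U_1,\dots,U_k\subseteq X$ with $\alpha([t_{i-1},t_i])\subseteq U_i$ such that every path $\gamma:[0,1]\to X$ with $\gamma(t_i)=\alpha(t_i)$ for $i=0,\dots,k$ and $\gamma([t_{i-1},t_i])\subseteq U_i$ for $i=1,\dots,k$ is not homotopic to $\beta$ rel. endpoints. $\pi_1^{qtop}(X,x)$ is $\pi_1(X,x)$ with the quotient topology from the loop space $\Omega(X,x)$ (compact-open topology) via $\alpha\mapsto[\alpha]$. $F_M(S)$ is the free (Markov) topological group on a space $S$. For a group with topology $G$, $\tau(G)$ is $G$ with the quotient topology with respect to the multiplication epimorphism $m_G:F_M(G)\to G$ (generator $g\mapsto g$). $\pi_1^{\tau}=\tau\circ\pi_1^{qtop}$ (its isomorphism type does not depend on the basepoint for path connected $X$). *)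

theory Defs
  imports "HOL-Analysis.Analysis" "HOL-Algebra.Group"
begin

definition phomotopic :: "'a topology \<Rightarrow> (real \<Rightarrow> 'a) \<Rightarrow> (real \<Rightarrow> 'a) \<Rightarrow> bool" where
  "phomotopic X p q \<longleftrightarrow>
     homotopic_with (\<lambda>h. h 0 = p 0 \<and> h 1 = p 1) (top_of_set {0..1}) X p q"

definition path_concat :: "(real \<Rightarrow> 'a) \<Rightarrow> (real \<Rightarrow> 'a) \<Rightarrow> real \<Rightarrow> 'a" where
  "path_concat p q = (\<lambda>t. if t \<le> 1/2 then p (2 * t) else q (2 * t - 1))"

definition homotopically_path_Hausdorff :: "'a topology \<Rightarrow> bool" where
  "homotopically_path_Hausdorff X \<longleftrightarrow>
    (\<forall>\<alpha> \<beta>. pathin X \<alpha> \<and> pathin X \<beta> \<and> \<alpha> 0 = \<beta> 0 \<and> \<alpha> 1 = \<beta> 1 \<and> \<not> phomotopic X \<alpha> \<beta> \<longrightarrow>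
      (\<exists>(k::nat) (t::nat \<Rightarrow> real) (U::nat \<Rightarrow> 'a set).
         1 \<le> k \<and> t 0 = 0 \<and> t k = 1 \<and>
         (\<forall>i\<in>{1..k}. t (i - 1) < t i \<and> openin X (U i) \<and> \<alpha> ` {t (i - 1)..t i} \<subseteq> U i) \<and>
         (\<forall>\<gamma>. pathin X \<gamma> \<and> (\<forall>i\<le>k. \<gamma> (t i) = \<alpha> (t i)) \<and>
                (\<forall>i\<in>{1..k}. \<gamma> ` {t (i - 1)..t i} \<subseteq> U i)
              \<longrightarrow> \<not> phomotopic X \<gamma> \<beta>)))"

definition loop_space_set :: "'a topology \<Rightarrow> 'a \<Rightarrow> (real \<Rightarrow> 'a) set" where
  "loop_space_set X x = {\<alpha>. pathin X \<alpha> \<and> \<alpha> 0 = x \<and> \<alpha> 1 = x}"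

text \<open>Compact-open topology: generated by the sets of loops mapping a compact
  \<open>K \<subseteq> [0,1]\<close> into an open \<open>U \<subseteq> X\<close> (with \<open>K = {}\<close> giving the whole loop space).\<close>
definition loop_space :: "'a topology \<Rightarrow> 'a \<Rightarrow> (real \<Rightarrow> 'a) topology" where
  "loop_space X x = topology_generated_by
     {{\<alpha> \<in> loop_space_set X x. \<alpha> ` K \<subseteq> U} | K U.
        compactin (top_of_set {0..1}) K \<and> openin X U}"

definition quotient_topology :: "'a topology \<Rightarrow> ('a \<Rightarrow> 'b) \<Rightarrow> 'b set \<Rightarrow> 'b topology" where
  "quotient_topology T f Y = topology (\<lambda>U. U \<subseteq> Y \<and> openin T {z \<in> topspace T. f z \<in> U})"

definition pclass :: "'a topology \<Rightarrow> 'a \<Rightarrow> (real \<Rightarrow> 'a) \<Rightarrow> (real \<Rightarrow> 'a) set" where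
  "pclass X x \<alpha> = {\<beta> \<in> loop_space_set X x. phomotopic X \<alpha> \<beta>}"

definition fundamental_group :: "'a topology \<Rightarrow> 'a \<Rightarrow> (real \<Rightarrow> 'a) set monoid" where
  "fundamental_group X x =
     \<lparr>carrier = pclass X x ` loop_space_set X x,
      mult = (\<lambda>A B. pclass X x (path_concat (SOME a. a \<in> A) (SOME b. b \<in> B))),
      one = pclass X x (\<lambda>t. x)\<rparr>"

definition pi1_qtop :: "'a topology \<Rightarrow> 'a \<Rightarrow> (real \<Rightarrow> 'a) set topology" where
  "pi1_qtop X x = quotient_topology (loop_space X x) (pclass X x) (carrier (fundamental_group X x))"

text \<open>Free group on a set \<open>S\<close>: reduced words over letters \<open>(s, True)\<close> = \<open>s\<close>
  and \<open>(s, False)\<close> = \<open>s\<inverse>\<close>.\<close>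
fun word_reduce :: "('g \<times> bool) list \<Rightarrow> ('g \<times> bool) list" where
  "word_reduce [] = []"
| "word_reduce (x # xs) =
     (case word_reduce xs of
        [] \<Rightarrow> [x]
      | y # ys \<Rightarrow> (if fst y = fst x \<and> snd y \<noteq> snd x then ys else x # y # ys))"

definition free_group :: "'g set \<Rightarrow> ('g \<times> bool) list monoid" where
  "free_group S =
     \<lparr>carrier = {w. fst ` set w \<subseteq> S \<and> word_reduce w = w},
      mult = (\<lambda>v w. word_reduce (v @ w)),
      one = []\<rparr>"

definition group_topology :: "('g, 'b) monoid_scheme \<Rightarrow> 'g topology \<Rightarrow> bool" where
  "group_topology G T \<longleftrightarrow>
     topspace T = carrier G \<and>
     continuous_map (prod_topology T T) T (\<lambda>(a, b). a \<otimes>\<^bsub>G\<^esub> b) \<and>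
     continuous_map T T (\<lambda>a. inv\<^bsub>G\<^esub> a)"

text \<open>Markov free topological group \<open>F_M(S)\<close>: the finest group topology on the
  free group on \<open>topspace S\<close> making the generator inclusion continuous (the
  supremum of all such group topologies).\<close>
definition free_top_group_topology :: "'g topology \<Rightarrow> ('g \<times> bool) list topology" where
  "free_top_group_topology S = topology_generated_by
     (\<Union>{{U. openin T U} | T.
         group_topology (free_group (topspace S)) T \<and>
         continuous_map S T (\<lambda>s. [(s, True)])})"

definition word_eval :: "('g, 'b) monoid_scheme \<Rightarrow> ('g \<times> bool) list \<Rightarrow> 'g" where
  "word_eval G w =
     foldr (\<lambda>(g, b) acc. (if b then g else inv\<^bsub>G\<^esub> g) \<otimes>\<^bsub>G\<^esub> acc) w \<one>\<^bsub>G\<^esub>"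

text \<open>\<open>\<tau>(G)\<close>: quotient topology on \<open>G\<close> w.r.t. \<open>m_G : F_M(G) \<rightarrow> G\<close>, where
  \<open>T\<close> is the given topology of \<open>G\<close>.\<close>
definition tau_topology :: "('g, 'b) monoid_scheme \<Rightarrow> 'g topology \<Rightarrow> 'g topology" where
  "tau_topology G T = quotient_topology (free_top_group_topology T) (word_eval G) (carrier G)"

definition pi1_tau :: "'a topology \<Rightarrow> 'a \<Rightarrow> (real \<Rightarrow> 'a) set topology" where
  "pi1_tau X x = tau_topology (fundamental_group X x) (pi1_qtop X x)"

end

theory Submission
  imports Defs
begin

definition wcons :: "('g \<times> bool) \<Rightarrow> ('g \<times> bool) list \<Rightarrow> ('g \<times> bool) list" where
  "wcons x ys = (case ys of [] \<Rightarrow> [x]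
      | y # ys' \<Rightarrow> (if fst y = fst x \<and> snd y \<noteq> snd x then ys' else x # y # ys'))"

fun wred :: "('g \<times> bool) list \<Rightarrow> bool" where
  "wred [] = True"
| "wred [x] = True"
| "wred (x # y # ys) = (\<not> (fst y = fst x \<and> snd y \<noteq> snd x) \<and> wred (y # ys))"

lemma word_reduce_Cons: "word_reduce (x # xs) = wcons x (word_reduce xs)"
  by (simp add: wcons_def)

declare word_reduce.simps(2)[simp del]

lemma wred_tl: "wred (x # xs) \<Longrightarrow> wred xs"
  by (cases xs) auto

lemma wred_wcons: "wred ys \<Longrightarrow> wred (wcons x ys)"
  by (cases ys rule: wred.cases) (auto simp: wcons_def)

lemma wred_word_reduce: "wred (word_reduce w)"
  by (induction w) (auto simp: word_reduce_Cons wred_wcons)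

lemma word_reduce_wred: "wred w \<Longrightarrow> word_reduce w = w"
proof (induction w)
  case Nil then show ?case by simp
next
  case (Cons x xs)
  then have "word_reduce xs = xs" using wred_tl by blast
  then show ?case using Cons.prems
    by (cases xs) (auto simp: word_reduce_Cons wcons_def)
qed

lemma word_reduce_idem: "word_reduce (word_reduce w) = word_reduce w"
  by (simp add: word_reduce_wred wred_word_reduce)

lemma word_reduce_append: "word_reduce (u @ v) = foldr wcons u (word_reduce v)"
  by (induction u) (auto simp: word_reduce_Cons)

lemma wred_foldr: "wred z \<Longrightarrow> wred (foldr wcons u z)"
  by (induction u) (auto simp: wred_wcons)

lemma wcons_cancel:
  assumes "wred q" shows "wcons x (wcons (fst x, \<not> snd x) q) = q"
proof (cases q)
  case Nil then show ?thesis by (auto simp: wcons_def)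
next
  case (Cons y ys)
  show ?thesis
  proof (cases "fst y = fst x \<and> snd y = snd x")
    case True
    then have "y = x" by (simp add: prod_eq_iff)
    have "wcons (fst x, \<not> snd x) q = ys" using True Cons by (auto simp: wcons_def)
    moreover have "wcons x ys = x # ys" using assms Cons \<open>y = x\<close>
      by (cases ys) (auto simp: wcons_def)
    ultimately show ?thesis using Cons \<open>y = x\<close> by simp
  next
    case False
    then have "wcons (fst x, \<not> snd x) q = (fst x, \<not> snd x) # q" using Cons
      by (auto simp: wcons_def)
    then show ?thesis by (auto simp: wcons_def)
  qed
qed

lemma foldr_wcons_wcons:
  assumes "wred r" "wred z"
  shows "foldr wcons (wcons x r) z = wcons x (foldr wcons r z)"
proof (cases r)
  case Nil then show ?thesis by (simp add: wcons_def)
next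
  case (Cons y ys)
  show ?thesis
  proof (cases "fst y = fst x \<and> snd y \<noteq> snd x")
    case True
    then have y: "y = (fst x, \<not> snd x)" by (simp add: prod_eq_iff)
    have "wred (foldr wcons ys z)" using assms wred_foldr by blast
    have e1: "wcons x r = ys" using Cons True by (simp add: wcons_def)
    have e2: "foldr wcons r z = wcons (fst x, \<not> snd x) (foldr wcons ys z)" using Cons y by simp
    show ?thesis unfolding e1 e2 using wcons_cancel[OF \<open>wred (foldr wcons ys z)\<close>, of x] by simp
  next
    case False
    then have "wcons x r = x # r" using Cons by (simp add: wcons_def)
    then show ?thesis by simp
  qed
qed

lemma foldr_word_reduce:
  "wred z \<Longrightarrow> foldr wcons u z = foldr wcons (word_reduce u) z"
proof (induction u)
  case Nil then show ?case by simp
next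
  case (Cons x u)
  have "foldr wcons (word_reduce (x # u)) z = foldr wcons (wcons x (word_reduce u)) z"
    by (simp add: word_reduce_Cons)
  also have "\<dots> = wcons x (foldr wcons (word_reduce u) z)"
    using foldr_wcons_wcons wred_word_reduce Cons.prems by blast
  finally show ?case using Cons by simp
qed

lemma word_reduce_assoc:
  "word_reduce (word_reduce (u @ v) @ w) = word_reduce (u @ word_reduce (v @ w))"
proof -
  have "word_reduce (word_reduce (u @ v) @ w) = foldr wcons (word_reduce (u @ v)) (word_reduce w)"
    by (simp add: word_reduce_append)
  also have "\<dots> = foldr wcons (u @ v) (word_reduce w)"
    using foldr_word_reduce[OF wred_word_reduce] by metis
  also have "\<dots> = foldr wcons u (word_reduce (v @ w))"
    by (simp add: word_reduce_append)
  also have "\<dots> = word_reduce (u @ word_reduce (v @ w))"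
    by (simp only: word_reduce_append[of u "word_reduce (v @ w)"] word_reduce_idem)
  finally show ?thesis .
qed

lemma fst_set_wcons: "fst ` set (wcons x ys) \<subseteq> insert (fst x) (fst ` set ys)"
  by (auto simp: wcons_def split: list.splits if_splits)

lemma fst_set_word_reduce: "fst ` set (word_reduce w) \<subseteq> fst ` set w"
proof (induction w)
  case Nil then show ?case by simp
next
  case (Cons x w)
  have "fst ` set (word_reduce (x # w)) \<subseteq> insert (fst x) (fst ` set (word_reduce w))"
    using fst_set_wcons[of x "word_reduce w"] by (simp add: word_reduce_Cons)
  also have "\<dots> \<subseteq> fst ` set (x # w)" using Cons.IH by auto
  finally show ?case .
qed

lemma foldr_winv:
  "wred w \<Longrightarrow> foldr wcons (rev (map (\<lambda>x. (fst x, \<not> snd x)) w)) w = []"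
proof (induction w)
  case Nil then show ?case by simp
next
  case (Cons x w)
  have "wred w" using Cons.prems wred_tl by blast
  have "wcons (fst x, \<not> snd x) (x # w) = w"
    using \<open>wred w\<close> Cons.prems by (cases w) (auto simp: wcons_def)
  then show ?case using Cons.IH[OF \<open>wred w\<close>] by simp
qed

lemma group_free_group: "group (free_group S)"
proof (rule groupI)
  fix x y assume "x \<in> carrier (free_group S)" "y \<in> carrier (free_group S)"
  moreover have "fst ` set (word_reduce (x @ y)) \<subseteq> fst ` set (x @ y)"
    by (rule fst_set_word_reduce)
  ultimately have "fst ` set (word_reduce (x @ y)) \<subseteq> S"
    unfolding free_group_def by (simp add: image_Un) blast
  then show "x \<otimes>\<^bsub>free_group S\<^esub> y \<in> carrier (free_group S)"
    by (simp add: free_group_def word_reduce_idem)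
next
  show "\<one>\<^bsub>free_group S\<^esub> \<in> carrier (free_group S)" by (simp add: free_group_def)
next
  fix x y z assume "x \<in> carrier (free_group S)" "y \<in> carrier (free_group S)" "z \<in> carrier (free_group S)"
  then show "x \<otimes>\<^bsub>free_group S\<^esub> y \<otimes>\<^bsub>free_group S\<^esub> z =
             x \<otimes>\<^bsub>free_group S\<^esub> (y \<otimes>\<^bsub>free_group S\<^esub> z)"
    by (simp add: free_group_def word_reduce_assoc)
next
  fix x assume "x \<in> carrier (free_group S)"
  then show "\<one>\<^bsub>free_group S\<^esub> \<otimes>\<^bsub>free_group S\<^esub> x = x" by (simp add: free_group_def)
next
  fix x assume x: "x \<in> carrier (free_group S)"
  let ?y = "word_reduce (rev (map (\<lambda>x. (fst x, \<not> snd x)) x))"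
  have "word_reduce x = x" using x by (simp add: free_group_def)
  then have wx: "wred x" using wred_word_reduce[of x] by simp
  have "fst ` set ?y \<subseteq> fst ` set (rev (map (\<lambda>x. (fst x, \<not> snd x)) x))"
    by (rule fst_set_word_reduce)
  also have "\<dots> = fst ` set x" by (auto simp: image_image)
  also have "\<dots> \<subseteq> S" using x by (simp add: free_group_def)
  finally have "?y \<in> carrier (free_group S)"
    by (simp add: free_group_def word_reduce_idem)
  moreover have "?y \<otimes>\<^bsub>free_group S\<^esub> x = \<one>\<^bsub>free_group S\<^esub>"
  proof -
    have "word_reduce (?y @ x) = foldr wcons ?y (word_reduce x)" by (simp add: word_reduce_append)
    also have "\<dots> = foldr wcons ?y x" using word_reduce_wred[OF wx] by simp
    also have "\<dots> = foldr wcons (rev (map (\<lambda>x. (fst x, \<not> snd x)) x)) x"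
      using foldr_word_reduce[OF wx] by metis
    also have "\<dots> = []" using foldr_winv[OF wx] .
    finally show ?thesis by (simp add: free_group_def)
  qed
  ultimately show "\<exists>y\<in>carrier (free_group S). y \<otimes>\<^bsub>free_group S\<^esub> x = \<one>\<^bsub>free_group S\<^esub>" by blast
qed

abbreviation "I01 \<equiv> top_of_set {0..1::real}"

definition prev :: "(real \<Rightarrow> 'a) \<Rightarrow> real \<Rightarrow> 'a" where
  "prev p = (\<lambda>t. p (1 - t))"

lemma path_concat_0 [simp]: "path_concat p q 0 = p 0"
  and path_concat_1 [simp]: "path_concat p q 1 = q 1"
  by (simp_all add: path_concat_def)

lemma prev_0 [simp]: "prev p 0 = p 1" and prev_1 [simp]: "prev p 1 = p 0"
  and prev_prev [simp]: "prev (prev p) = p"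
  by (simp_all add: prev_def)

lemma phom_props:
  assumes "phomotopic X p q"
  shows "pathin X p" "pathin X q" "p 0 = q 0" "p 1 = q 1"
proof -
  have h: "homotopic_with (\<lambda>h. h 0 = p 0 \<and> h 1 = p 1) I01 X p q"
    using assms by (simp add: phomotopic_def)
  show "pathin X p" "pathin X q" using homotopic_with_imp_continuous_maps[OF h]
    by (auto simp: pathin_def)
  show "p 0 = q 0" "p 1 = q 1" using homotopic_with_imp_property[OF h] by auto
qed

lemma phom_refl: "pathin X p \<Longrightarrow> phomotopic X p p"
  by (simp add: phomotopic_def pathin_def)

lemma phom_sym: assumes "phomotopic X p q" shows "phomotopic X q p"
proof -
  have e: "q 0 = p 0" "q 1 = p 1" using phom_props[OF assms] by auto
  show ?thesis using assms unfolding phomotopic_def e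
    using homotopic_with_sym by blast
qed

lemma phom_trans: assumes "phomotopic X p q" "phomotopic X q r" shows "phomotopic X p r"
proof -
  have e: "q 0 = p 0" "q 1 = p 1" using phom_props[OF assms(1)] by auto
  show ?thesis using assms unfolding phomotopic_def e
    using homotopic_with_trans by blast
qed

lemma phom_eq:
  assumes "phomotopic X p q" "\<And>t. t \<in> {0..1} \<Longrightarrow> p' t = p t" "\<And>t. t \<in> {0..1} \<Longrightarrow> q' t = q t"
  shows "phomotopic X p' q'"
proof -
  have e: "p' 0 = p 0" "p' 1 = p 1" using assms(2) by auto
  show ?thesis using assms(1) unfolding phomotopic_def e
    by (rule homotopic_with_eq) (use assms in auto)
qed

lemma pathin_concat:
  assumes g1: "pathin X g1" and g2: "pathin X g2" and e: "g1 1 = g2 0"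
  shows "pathin X (path_concat g1 g2)"
proof -
  let ?T01 = "top_of_set {0..1::real}"
  let ?g = "\<lambda>x. if x \<le> 1/2 then (g1 \<circ> (\<lambda>t. 2 * t)) x else (g2 \<circ> (\<lambda>t. 2 * t -1)) x"
  have "continuous_map (subtopology euclideanreal {0..1}) X ?g"
  proof (intro continuous_map_cases_le continuous_map_compose, force, force)
    show "continuous_map (subtopology ?T01 {x \<in> topspace ?T01. x \<le> 1/2}) ?T01 ((*) 2)"
      by (auto simp: continuous_map_in_subtopology continuous_map_from_subtopology)
    have "continuous_map
           (subtopology (top_of_set {0..1}) {x. 0 \<le> x \<and> x \<le> 1 \<and> 1 \<le> x * 2})
           euclideanreal (\<lambda>t. 2 * t - 1)"
      by (intro continuous_intros) (force intro: continuous_map_from_subtopology)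
    then show "continuous_map (subtopology ?T01 {x \<in> topspace ?T01. 1/2 \<le> x}) ?T01 (\<lambda>t. 2 * t - 1)"
      by (force simp: continuous_map_in_subtopology)
    show "(g1 \<circ> (*) 2) x = (g2 \<circ> (\<lambda>t. 2 * t - 1)) x" if "x \<in> topspace ?T01" "x = 1/2" for x
    proof -
      have "2 * x = 1" using that by simp
      then show ?thesis using e by simp
    qed
  qed (use g1 g2 e in \<open>auto simp: pathin_def mult.commute\<close>)
  moreover have "?g = path_concat g1 g2" by (auto simp: path_concat_def fun_eq_iff)
  ultimately show ?thesis by (simp add: pathin_def)
qed

lemma pathin_prev: "pathin X p \<Longrightarrow> pathin X (prev p)"
proof -
  assume p: "pathin X p"
  have "continuous_map I01 I01 (\<lambda>t. 1 - t)"
    by (auto simp: continuous_map_in_subtopology intro!: continuous_intros)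
  then have "continuous_map I01 X (p \<circ> (\<lambda>t. 1 - t))"
    by (rule continuous_map_compose[OF _ p[unfolded pathin_def]])
  then show ?thesis by (simp add: pathin_def prev_def o_def)
qed

lemma convex01:
  fixes s a b :: real
  assumes "0 \<le> s" "s \<le> 1" "0 \<le> a" "a \<le> 1" "0 \<le> b" "b \<le> 1"
  shows "0 \<le> (1 - s) * a + s * b" "(1 - s) * a + s * b \<le> 1"
proof -
  show "0 \<le> (1 - s) * a + s * b" using assms by simp
  have "(1 - s) * a \<le> (1 - s) * 1" using assms by (intro mult_left_mono) auto
  moreover have "s * b \<le> s * 1" using assms by (intro mult_left_mono) auto
  ultimately show "(1 - s) * a + s * b \<le> 1" by simp
qed

lemma phom_reparam:
  assumes p: "pathin X p"
    and f: "continuous_on {0..1} f" "f ` {0..1} \<subseteq> {0..1}"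
    and g: "continuous_on {0..1} g" "g ` {0..1} \<subseteq> {0..1}"
    and e: "f 0 = g 0" "f 1 = g 1"
  shows "phomotopic X (p \<circ> f) (p \<circ> g)"
proof -
  let ?H = "\<lambda>z::real\<times>real. (1 - fst z) * f (snd z) + fst z * g (snd z)"
  have cf: "continuous_map I01 euclideanreal f" "continuous_map I01 euclideanreal g"
    using f g by auto
  have "continuous_map (prod_topology I01 I01) euclideanreal ?H"
    by (intro continuous_intros continuous_map_compose[OF continuous_map_snd cf(1), unfolded o_def]
        continuous_map_compose[OF continuous_map_snd cf(2), unfolded o_def]
        continuous_map_compose[OF continuous_map_fst continuous_map_from_subtopology[OF continuous_map_id], unfolded o_def id_def])
  moreover have "?H z \<in> {0..1}" if "z \<in> topspace (prod_topology I01 I01)" for z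
  proof -
    have "fst z \<in> {0..1}" "snd z \<in> {0..1}" using that by auto
    then have "f (snd z) \<in> {0..1}" "g (snd z) \<in> {0..1}"
      using f(2) g(2) imageI[OF \<open>snd z \<in> {0..1}\<close>, of f] imageI[OF \<open>snd z \<in> {0..1}\<close>, of g]
      by blast+
    then show ?thesis using convex01[of "fst z" "f (snd z)" "g (snd z)"] \<open>fst z \<in> {0..1}\<close> by auto
  qed
  ultimately have cH: "continuous_map (prod_topology I01 I01) I01 ?H"
    by (auto simp: continuous_map_in_subtopology)
  have "continuous_map (prod_topology I01 I01) X (p \<circ> ?H)"
    using continuous_map_compose[OF cH] p by (auto simp: pathin_def)
  moreover have "(p \<circ> ?H) (s, 0) = (p \<circ> f) 0 \<and> (p \<circ> ?H) (s, 1) = (p \<circ> f) 1" for s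
    using e by (simp add: algebra_simps)
  ultimately show ?thesis
    unfolding phomotopic_def homotopic_with_def
    by (intro exI[of _ "p \<circ> ?H"]) auto
qed


lemma phom_reparam_eq:
  assumes m: "pathin X m"
    and f: "continuous_on {0..1} f" "f ` {0..1} \<subseteq> {0..1}"
    and g: "continuous_on {0..1} g" "g ` {0..1} \<subseteq> {0..1}"
    and e: "f 0 = g 0" "f 1 = g 1"
    and a: "\<And>t. t \<in> {0..1} \<Longrightarrow> a t = m (f t)"
    and b: "\<And>t. t \<in> {0..1} \<Longrightarrow> b t = m (g t)"
  shows "phomotopic X a b"
  using phom_eq[OF phom_reparam[OF m f g e]] a b by auto

lemma phom_assoc:
  assumes p: "pathin X p" and q: "pathin X q" and r: "pathin X r"
    and e: "p 1 = q 0" "q 1 = r 0"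
  shows "phomotopic X (path_concat (path_concat p q) r) (path_concat p (path_concat q r))"
proof (rule phom_reparam_eq[where m = "path_concat (path_concat p q) r"
      and f = "\<lambda>t. t" and g = "\<lambda>t. max (t/2) (max (t - 1/4) (2*t - 1))"])
  show "pathin X (path_concat (path_concat p q) r)"
    using p q r e by (intro pathin_concat) auto
  show "continuous_on {0..1} (\<lambda>t::real. max (t/2) (max (t - 1/4) (2*t - 1)))"
    by (intro continuous_intros) auto
  show "(\<lambda>t::real. max (t/2) (max (t - 1/4) (2*t - 1))) ` {0..1} \<subseteq> {0..1}"
    by (auto simp: max_def)
  fix t :: real assume t: "t \<in> {0..1}"
  show "path_concat p (path_concat q r) t =
        path_concat (path_concat p q) r (max (t/2) (max (t - 1/4) (2*t - 1)))"
  proof (cases "t \<le> 1/2")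
    case True
    then have "max (t/2) (max (t - 1/4) (2*t - 1)) = t/2" by (auto simp: max_def)
    then show ?thesis using True by (simp add: path_concat_def)
  next
    case False
    show ?thesis
    proof (cases "t \<le> 3/4")
      case True
      then have "max (t/2) (max (t - 1/4) (2*t - 1)) = t - 1/4" using False by (auto simp: max_def)
      moreover have "2 * (2 * (t - 1/4)) - 1 = 2 * (2 * t - 1)" by (simp add: algebra_simps)
      ultimately show ?thesis using True False by (simp add: path_concat_def)
    next
      case False2: False
      then have "max (t/2) (max (t - 1/4) (2*t - 1)) = 2 * t - 1" using False by (auto simp: max_def)
      then show ?thesis using False False2 by (simp add: path_concat_def)
    qed
  qed
qed auto

lemma phom_rid:
  assumes p: "pathin X p"
  shows "phomotopic X (path_concat p (\<lambda>t. p 1)) p"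
proof (rule phom_reparam_eq[where m = p and f = "\<lambda>t. min (2*t) 1" and g = "\<lambda>t. t"])
  show "continuous_on {0..1} (\<lambda>t::real. min (2*t) 1)" by (intro continuous_intros)
  show "(\<lambda>t::real. min (2*t) 1) ` {0..1} \<subseteq> {0..1}" by (auto simp: min_def)
  fix t :: real assume t: "t \<in> {0..1}"
  show "path_concat p (\<lambda>t. p 1) t = p (min (2 * t) 1)"
    by (auto simp: path_concat_def min_def)
qed (use p in auto)

lemma phom_lid:
  assumes p: "pathin X p"
  shows "phomotopic X (path_concat (\<lambda>t. p 0) p) p"
proof (rule phom_reparam_eq[where m = p and f = "\<lambda>t. max 0 (2*t - 1)" and g = "\<lambda>t. t"])
  show "continuous_on {0..1} (\<lambda>t::real. max 0 (2*t - 1))" by (intro continuous_intros)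
  show "(\<lambda>t::real. max 0 (2*t - 1)) ` {0..1} \<subseteq> {0..1}" by (auto simp: max_def)
  fix t :: real assume t: "t \<in> {0..1}"
  show "path_concat (\<lambda>t. p 0) p t = p (max 0 (2 * t - 1))"
  proof (cases "t \<le> 1/2")
    case True
    then have "max 0 (2 * t - 1) = 0" by simp
    then show ?thesis using True by (simp add: path_concat_def)
  next
    case False
    then have "max 0 (2 * t - 1) = 2 * t - 1" by simp
    then show ?thesis using False by (simp add: path_concat_def)
  qed
qed (use p in auto)

lemma phom_rinv:
  assumes p: "pathin X p"
  shows "phomotopic X (path_concat p (prev p)) (\<lambda>t. p 0)"
proof (rule phom_reparam_eq[where m = p and f = "\<lambda>t. 1 - \<bar>2*t - 1\<bar>" and g = "\<lambda>t. 0"])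
  show "continuous_on {0..1} (\<lambda>t::real. 1 - \<bar>2*t - 1\<bar>)" by (intro continuous_intros)
  show "(\<lambda>t::real. 1 - \<bar>2*t - 1\<bar>) ` {0..1} \<subseteq> {0..1}" by (auto simp: abs_if)
  fix t :: real assume t: "t \<in> {0..1}"
  show "path_concat p (prev p) t = p (1 - \<bar>2*t - 1\<bar>)"
  proof (cases "t \<le> 1/2")
    case True
    then have "1 - \<bar>2*t - 1\<bar> = 2 * t" by (simp add: abs_if)
    then show ?thesis using True by (simp add: path_concat_def)
  next
    case False
    then have "1 - \<bar>2*t - 1\<bar> = 1 - (2 * t - 1)" by (simp add: abs_if)
    then show ?thesis using False by (simp add: path_concat_def prev_def)
  qed
qed (use p in auto)

lemma phom_linv:
  assumes p: "pathin X p"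
  shows "phomotopic X (path_concat (prev p) p) (\<lambda>t. p 1)"
  using phom_rinv[OF pathin_prev[OF p]] by simp

lemma phom_concat:
  assumes h1: "phomotopic X p p'" and h2: "phomotopic X q q'" and e: "p 1 = q 0"
  shows "phomotopic X (path_concat p q) (path_concat p' q')"
proof -
  obtain H1 where H1: "continuous_map (prod_topology I01 I01) X H1"
    "\<And>x. H1 (0, x) = p x" "\<And>x. H1 (1, x) = p' x"
    "\<And>s. s \<in> {0..1} \<Longrightarrow> H1 (s, 0) = p 0 \<and> H1 (s, 1) = p 1"
    using h1 unfolding phomotopic_def homotopic_with_def by auto
  obtain H2 where H2: "continuous_map (prod_topology I01 I01) X H2"
    "\<And>x. H2 (0, x) = q x" "\<And>x. H2 (1, x) = q' x"
    "\<And>s. s \<in> {0..1} \<Longrightarrow> H2 (s, 0) = q 0 \<and> H2 (s, 1) = q 1"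
    using h2 unfolding phomotopic_def homotopic_with_def by auto
  let ?Z = "prod_topology I01 I01"
  let ?K = "\<lambda>z::real\<times>real. if snd z \<le> 1/2 then H1 (fst z, 2 * snd z) else H2 (fst z, 2 * snd z - 1)"
  have csnd: "continuous_map ?Z euclideanreal snd"
    using continuous_map_snd[of I01 I01] by (simp add: continuous_map_in_subtopology)
  have cfst: "continuous_map ?Z I01 fst" by (rule continuous_map_fst)
  have "continuous_map ?Z X ?K"
  proof (rule continuous_map_cases_le)
    show "continuous_map ?Z euclideanreal snd" by (rule csnd)
    show "continuous_map ?Z euclideanreal (\<lambda>x. 1/2)" by simp
    have "continuous_map (subtopology ?Z {x \<in> topspace ?Z. snd x \<le> 1/2}) ?Z (\<lambda>z. (fst z, 2 * snd z))"
    proof (intro continuous_map_pairedI)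
      show "continuous_map (subtopology ?Z {x \<in> topspace ?Z. snd x \<le> 1/2}) I01 fst"
        by (rule continuous_map_from_subtopology[OF cfst])
      have "continuous_map (subtopology ?Z {x \<in> topspace ?Z. snd x \<le> 1/2}) euclideanreal (\<lambda>z. 2 * snd z)"
        by (intro continuous_intros continuous_map_from_subtopology[OF csnd])
      then show "continuous_map (subtopology ?Z {x \<in> topspace ?Z. snd x \<le> 1/2}) I01 (\<lambda>z. 2 * snd z)"
        by (auto simp: continuous_map_in_subtopology)
    qed
    then show "continuous_map (subtopology ?Z {x \<in> topspace ?Z. snd x \<le> 1/2}) X (\<lambda>z. H1 (fst z, 2 * snd z))"
      using continuous_map_compose[OF _ H1(1)] by (simp add: o_def)
    have "continuous_map (subtopology ?Z {x \<in> topspace ?Z. 1/2 \<le> snd x}) ?Z (\<lambda>z. (fst z, 2 * snd z - 1))"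
    proof (intro continuous_map_pairedI)
      show "continuous_map (subtopology ?Z {x \<in> topspace ?Z. 1/2 \<le> snd x}) I01 fst"
        by (rule continuous_map_from_subtopology[OF cfst])
      have "continuous_map (subtopology ?Z {x \<in> topspace ?Z. 1/2 \<le> snd x}) euclideanreal (\<lambda>z. 2 * snd z - 1)"
        by (intro continuous_intros continuous_map_from_subtopology[OF csnd])
      then show "continuous_map (subtopology ?Z {x \<in> topspace ?Z. 1/2 \<le> snd x}) I01 (\<lambda>z. 2 * snd z - 1)"
        by (auto simp: continuous_map_in_subtopology)
    qed
    then show "continuous_map (subtopology ?Z {x \<in> topspace ?Z. 1/2 \<le> snd x}) X (\<lambda>z. H2 (fst z, 2 * snd z - 1))"
      using continuous_map_compose[OF _ H2(1)] by (simp add: o_def)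
    fix z assume z: "z \<in> topspace ?Z" "snd z = 1/2"
    then have "2 * snd z = 1" "fst z \<in> {0..1}" by auto
    then show "H1 (fst z, 2 * snd z) = H2 (fst z, 2 * snd z - 1)"
      using H1(4)[of "fst z"] H2(4)[of "fst z"] e by simp
  qed
  moreover have "?K (0, x) = path_concat p q x" "?K (1, x) = path_concat p' q' x" for x
    by (simp_all add: H1 H2 path_concat_def)
  moreover have "?K (s, 0) = path_concat p q 0 \<and> ?K (s, 1) = path_concat p q 1" if "s \<in> {0..1}" for s
    using H1(4)[OF that] H2(4)[OF that] by simp
  ultimately show ?thesis
    unfolding phomotopic_def homotopic_with_def
    by (intro exI[of _ ?K]) auto
qed

lemma pclass_eq:
  assumes "phomotopic X a b" shows "pclass X x a = pclass X x b"
  using assms phom_trans phom_sym unfolding pclass_def by blast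

lemma pclass_self: "a \<in> loop_space_set X x \<Longrightarrow> a \<in> pclass X x a"
  by (auto simp: pclass_def loop_space_set_def intro: phom_refl)

lemma some_pclass:
  assumes "a \<in> loop_space_set X x"
  shows "(SOME b. b \<in> pclass X x a) \<in> loop_space_set X x \<and> phomotopic X a (SOME b. b \<in> pclass X x a)"
proof -
  have "(SOME b. b \<in> pclass X x a) \<in> pclass X x a" using pclass_self[OF assms] by (rule someI[where P = "\<lambda>b. b \<in> pclass X x a"])
  then show ?thesis by (simp add: pclass_def)
qed

lemma loop_concat:
  assumes "a \<in> loop_space_set X x" "b \<in> loop_space_set X x"
  shows "path_concat a b \<in> loop_space_set X x"
  using assms pathin_concat[of X a b] by (auto simp: loop_space_set_def)

lemma loop_prev:
  assumes "a \<in> loop_space_set X x" shows "prev a \<in> loop_space_set X x"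
  using assms pathin_prev[of X a] by (auto simp: loop_space_set_def)

lemma loop_const:
  assumes "x \<in> topspace X" shows "(\<lambda>t. x) \<in> loop_space_set X x"
  using assms by (auto simp: loop_space_set_def pathin_def)

lemma pi1_mult:
  assumes "a \<in> loop_space_set X x" "b \<in> loop_space_set X x"
  shows "pclass X x a \<otimes>\<^bsub>fundamental_group X x\<^esub> pclass X x b = pclass X x (path_concat a b)"
proof -
  let ?a = "SOME c. c \<in> pclass X x a" and ?b = "SOME c. c \<in> pclass X x b"
  have "phomotopic X (path_concat a b) (path_concat ?a ?b)"
    using some_pclass[OF assms(1)] some_pclass[OF assms(2)] assms
    by (intro phom_concat) (auto simp: loop_space_set_def)
  then show ?thesis by (simp add: fundamental_group_def pclass_eq)
qed

lemma group_pi1: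
  assumes x: "x \<in> topspace X"
  shows "group (fundamental_group X x)"
proof (rule groupI)
  fix A B assume "A \<in> carrier (fundamental_group X x)" "B \<in> carrier (fundamental_group X x)"
  then obtain a b where ab: "a \<in> loop_space_set X x" "b \<in> loop_space_set X x"
    "A = pclass X x a" "B = pclass X x b" by (auto simp: fundamental_group_def)
  then show "A \<otimes>\<^bsub>fundamental_group X x\<^esub> B \<in> carrier (fundamental_group X x)"
    using pi1_mult[OF ab(1,2)] loop_concat[OF ab(1,2)] by (simp add: fundamental_group_def)
next
  show "\<one>\<^bsub>fundamental_group X x\<^esub> \<in> carrier (fundamental_group X x)"
    using loop_const[OF x] by (simp add: fundamental_group_def)
next
  fix A B C assume "A \<in> carrier (fundamental_group X x)" "B \<in> carrier (fundamental_group X x)"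
    "C \<in> carrier (fundamental_group X x)"
  then obtain a b c where abc: "a \<in> loop_space_set X x" "b \<in> loop_space_set X x" "c \<in> loop_space_set X x"
    "A = pclass X x a" "B = pclass X x b" "C = pclass X x c" by (auto simp: fundamental_group_def)
  have "phomotopic X (path_concat (path_concat a b) c) (path_concat a (path_concat b c))"
    using abc by (intro phom_assoc) (auto simp: loop_space_set_def)
  then show "A \<otimes>\<^bsub>fundamental_group X x\<^esub> B \<otimes>\<^bsub>fundamental_group X x\<^esub> C =
             A \<otimes>\<^bsub>fundamental_group X x\<^esub> (B \<otimes>\<^bsub>fundamental_group X x\<^esub> C)"
    using abc by (simp add: pi1_mult loop_concat pclass_eq)
next
  fix A assume "A \<in> carrier (fundamental_group X x)"
  then obtain a where a: "a \<in> loop_space_set X x" "A = pclass X x a"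
    by (auto simp: fundamental_group_def)
  have "phomotopic X (path_concat (\<lambda>t. a 0) a) a"
    using a by (intro phom_lid) (auto simp: loop_space_set_def)
  moreover have "a 0 = x" using a by (simp add: loop_space_set_def)
  ultimately have "phomotopic X (path_concat (\<lambda>t. x) a) a" by simp
  then show "\<one>\<^bsub>fundamental_group X x\<^esub> \<otimes>\<^bsub>fundamental_group X x\<^esub> A = A"
    using a pi1_mult[OF loop_const[OF x] a(1)] by (simp add: fundamental_group_def pclass_eq)
next
  fix A assume "A \<in> carrier (fundamental_group X x)"
  then obtain a where a: "a \<in> loop_space_set X x" "A = pclass X x a"
    by (auto simp: fundamental_group_def)
  have "phomotopic X (path_concat (prev a) a) (\<lambda>t. a 1)"
    using a by (intro phom_linv) (auto simp: loop_space_set_def)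
  moreover have "a 1 = x" using a by (simp add: loop_space_set_def)
  ultimately have "phomotopic X (path_concat (prev a) a) (\<lambda>t. x)" by simp
  then have "pclass X x (prev a) \<otimes>\<^bsub>fundamental_group X x\<^esub> A = \<one>\<^bsub>fundamental_group X x\<^esub>"
    using a pi1_mult[OF loop_prev[OF a(1)] a(1)] by (simp add: fundamental_group_def pclass_eq)
  moreover have "pclass X x (prev a) \<in> carrier (fundamental_group X x)"
    using loop_prev[OF a(1)] by (simp add: fundamental_group_def)
  ultimately show "\<exists>y\<in>carrier (fundamental_group X x). y \<otimes>\<^bsub>fundamental_group X x\<^esub> A = \<one>\<^bsub>fundamental_group X x\<^esub>"
    by blast
qed


lemmas phom_trans' [trans] = phom_trans

lemma phom_right_cancel:
  assumes p: "pathin X p" and q: "pathin X q" and R: "pathin X R"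
    and e: "p 1 = R 0" "q 1 = R 0"
    and h: "phomotopic X (path_concat p R) (path_concat q R)"
  shows "phomotopic X p q"
proof -
  have pR: "pathin X (prev R)" using pathin_prev[OF R] .
  have "phomotopic X p (path_concat p (\<lambda>t. p 1))" using phom_sym[OF phom_rid[OF p]] .
  also have "phomotopic X \<dots> (path_concat p (path_concat R (prev R)))"
    using phom_concat[OF phom_refl[OF p] phom_sym[OF phom_rinv[OF R]]] e by simp
  also have "phomotopic X \<dots> (path_concat (path_concat p R) (prev R))"
    using phom_sym[OF phom_assoc[OF p R pR]] e by simp
  also have "phomotopic X \<dots> (path_concat (path_concat q R) (prev R))"
    using phom_concat[OF h phom_refl[OF pR]] by simp
  also have "phomotopic X \<dots> (path_concat q (path_concat R (prev R)))"
    using phom_assoc[OF q R pR] e by simp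
  also have "phomotopic X \<dots> (path_concat q (\<lambda>t. q 1))"
    using phom_concat[OF phom_refl[OF q] phom_rinv[OF R]] e by simp
  also have "phomotopic X \<dots> q" using phom_rid[OF q] .
  finally show ?thesis .
qed

lemma phom_left_null:
  assumes d: "pathin X d" and u: "pathin X u" and e: "d 1 = u 0"
    and h: "phomotopic X (path_concat d u) (\<lambda>t. d 0)"
  shows "phomotopic X u (prev d)"
proof -
  have pd: "pathin X (prev d)" using pathin_prev[OF d] .
  have "phomotopic X u (path_concat (\<lambda>t. u 0) u)" using phom_sym[OF phom_lid[OF u]] .
  also have "phomotopic X \<dots> (path_concat (path_concat (prev d) d) u)"
    using phom_concat[OF phom_sym[OF phom_linv[OF d]] phom_refl[OF u]] e by simp
  also have "phomotopic X \<dots> (path_concat (prev d) (path_concat d u))"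
    using phom_assoc[OF pd d u] e by simp
  also have "phomotopic X \<dots> (path_concat (prev d) (\<lambda>t. d 0))"
    using phom_concat[OF phom_refl[OF pd] h] by simp
  also have "phomotopic X \<dots> (prev d)" using phom_rid[OF pd] by simp
  finally show ?thesis .
qed

lemma phom_cancel_tail:
  assumes b: "pathin X b" and d: "pathin X d" and e: "d 1 = b 0"
  shows "phomotopic X (path_concat b (path_concat (prev b) (prev d))) (prev d)"
proof -
  have pb: "pathin X (prev b)" using pathin_prev[OF b] .
  have pd: "pathin X (prev d)" using pathin_prev[OF d] .
  have "phomotopic X (path_concat b (path_concat (prev b) (prev d)))
          (path_concat (path_concat b (prev b)) (prev d))"
    using phom_sym[OF phom_assoc[OF b pb pd]] e by simp
  also have "phomotopic X \<dots> (path_concat (\<lambda>t. b 0) (prev d))"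
    using phom_concat[OF phom_rinv[OF b] phom_refl[OF pd]] e by simp
  also have "phomotopic X \<dots> (prev d)" using phom_lid[OF pd] e by simp
  finally show ?thesis .
qed

lemma claim_null:
  assumes d: "pathin X d" and g: "pathin X g" and b: "pathin X b"
    and e: "d 1 = b 0" "g 0 = b 0" "g 1 = b 1"
    and h: "phomotopic X g b"
  shows "phomotopic X (path_concat d (path_concat g (path_concat (prev b) (prev d)))) (\<lambda>t. d 0)"
proof -
  have pb: "pathin X (prev b)" using pathin_prev[OF b] .
  have pd: "pathin X (prev d)" using pathin_prev[OF d] .
  have R: "pathin X (path_concat (prev b) (prev d))" using pathin_concat[OF pb pd] e by simp
  have "phomotopic X (path_concat d (path_concat g (path_concat (prev b) (prev d))))
         (path_concat d (path_concat b (path_concat (prev b) (prev d))))"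
    using phom_concat[OF phom_refl[OF d] phom_concat[OF h phom_refl[OF R]]] e by simp
  also have "phomotopic X \<dots> (path_concat d (prev d))"
    using phom_concat[OF phom_refl[OF d] phom_cancel_tail[OF b d e(1)]] e by simp
  also have "phomotopic X \<dots> (\<lambda>t. d 0)" using phom_rinv[OF d] .
  finally show ?thesis .
qed

lemma claim_nonnull:
  assumes d: "pathin X d" and a: "pathin X a" and b: "pathin X b"
    and e: "d 1 = b 0" "a 0 = b 0" "a 1 = b 1"
    and h: "phomotopic X (path_concat d (path_concat a (path_concat (prev b) (prev d)))) (\<lambda>t. d 0)"
  shows "phomotopic X a b"
proof -
  have pb: "pathin X (prev b)" using pathin_prev[OF b] .
  have pd: "pathin X (prev d)" using pathin_prev[OF d] .
  have R: "pathin X (path_concat (prev b) (prev d))" using pathin_concat[OF pb pd] e by simp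
  have aR: "pathin X (path_concat a (path_concat (prev b) (prev d)))"
    using pathin_concat[OF a R] e by simp
  have e1: "d 1 = path_concat a (path_concat (prev b) (prev d)) 0" using e by simp
  have "phomotopic X (path_concat a (path_concat (prev b) (prev d))) (prev d)"
    by (rule phom_left_null[OF d aR e1 h])
  also have "phomotopic X \<dots> (path_concat b (path_concat (prev b) (prev d)))"
    using phom_sym[OF phom_cancel_tail[OF b d e(1)]] .
  finally have hh: "phomotopic X (path_concat a (path_concat (prev b) (prev d)))
     (path_concat b (path_concat (prev b) (prev d)))" .
  have e2: "a 1 = path_concat (prev b) (prev d) 0" "b 1 = path_concat (prev b) (prev d) 0"
    using e by simp_all
  show ?thesis by (rule phom_right_cancel[OF a b R e2 hh])
qed

lemma istopology_quot: "istopology (\<lambda>U. U \<subseteq> Y \<and> openin T {z \<in> topspace T. f z \<in> U})"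
proof -
  have 1: "S \<inter> R \<subseteq> Y \<and> openin T {z \<in> topspace T. f z \<in> S \<inter> R}"
    if "S \<subseteq> Y \<and> openin T {z \<in> topspace T. f z \<in> S}" "R \<subseteq> Y \<and> openin T {z \<in> topspace T. f z \<in> R}" for S R
  proof -
    have "{z \<in> topspace T. f z \<in> S \<inter> R} = {z \<in> topspace T. f z \<in> S} \<inter> {z \<in> topspace T. f z \<in> R}" by auto
    then show ?thesis using that by auto
  qed
  have 2: "\<Union>K \<subseteq> Y \<and> openin T {z \<in> topspace T. f z \<in> \<Union>K}"
    if K: "\<forall>S\<in>K. S \<subseteq> Y \<and> openin T {z \<in> topspace T. f z \<in> S}" for K
  proof -
    have "{z \<in> topspace T. f z \<in> \<Union>K} = \<Union>((\<lambda>S. {z \<in> topspace T. f z \<in> S}) ` K)" by auto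
    moreover have "openin T (\<Union>((\<lambda>S. {z \<in> topspace T. f z \<in> S}) ` K))"
      using K by (intro openin_Union) auto
    ultimately show ?thesis using K by auto
  qed
  show ?thesis unfolding istopology_def using 1 2 by blast
qed

lemma openin_quot:
  "openin (quotient_topology T f Y) U \<longleftrightarrow> U \<subseteq> Y \<and> openin T {z \<in> topspace T. f z \<in> U}"
  unfolding quotient_topology_def by (subst topology_inverse'[OF istopology_quot]) simp

lemma topspace_quot:
  assumes "f ` topspace T \<subseteq> Y"
  shows "topspace (quotient_topology T f Y) = Y"
proof -
  have "{z \<in> topspace T. f z \<in> Y} = topspace T" using assms by auto
  then have "openin (quotient_topology T f Y) Y" by (simp add: openin_quot)
  then have "Y \<subseteq> topspace (quotient_topology T f Y)" by (rule openin_subset)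
  moreover have "topspace (quotient_topology T f Y) \<subseteq> Y"
    using openin_quot[of T f Y "topspace (quotient_topology T f Y)"] by simp
  ultimately show ?thesis by blast
qed

definition indisc :: "'b set \<Rightarrow> 'b topology" where
  "indisc C = topology (\<lambda>U. U = {} \<or> U = C)"

lemma openin_indisc: "openin (indisc C) U \<longleftrightarrow> U = {} \<or> U = C"
proof -
  have "\<Union>K = {} \<or> \<Union>K = C" if "\<forall>S\<in>K. S = {} \<or> S = C" for K
  proof (cases "C \<in> K")
    case True then show ?thesis using that by blast
  next
    case False then show ?thesis using that by blast
  qed
  then have "istopology (\<lambda>U. U = {} \<or> U = C)" unfolding istopology_def by auto
  then show ?thesis by (simp add: indisc_def)
qed

lemma topspace_indisc: "topspace (indisc C) = C"
  unfolding topspace_def openin_indisc by auto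

lemma continuous_map_indisc:
  "continuous_map Z (indisc C) h \<longleftrightarrow> h ` topspace Z \<subseteq> C"
proof
  assume "continuous_map Z (indisc C) h"
  then show "h ` topspace Z \<subseteq> C" using continuous_map_image_subset_topspace topspace_indisc by metis
next
  assume h: "h ` topspace Z \<subseteq> C"
  show "continuous_map Z (indisc C) h"
    unfolding continuous_map
  proof (intro conjI allI impI)
    show "h ` topspace Z \<subseteq> topspace (indisc C)" using h by (simp add: topspace_indisc)
    fix U assume "openin (indisc C) U"
    then have "U = {} \<or> U = C" by (simp add: openin_indisc)
    then show "openin Z {x \<in> topspace Z. h x \<in> U}"
    proof
      assume "U = C"
      then have "{x \<in> topspace Z. h x \<in> U} = topspace Z" using h by auto
      then show ?thesis by simp
    qed simp
  qed
qed

context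
  fixes X :: "'a topology" and x0 :: 'a
  assumes x0: "x0 \<in> topspace X"
begin

lemma topspace_loop_space: "topspace (loop_space X x0) = loop_space_set X x0"
proof -
  have "loop_space_set X x0 \<in> {{\<alpha> \<in> loop_space_set X x0. \<alpha> ` K \<subseteq> U} | K U.
        compactin (top_of_set {0..1}) K \<and> openin X U}"
    by (rule CollectI, rule exI[of _ "{}"], rule exI[of _ "topspace X"]) auto
  then show ?thesis unfolding loop_space_def topology_generated_by_topspace by blast
qed

lemma topspace_qtop: "topspace (pi1_qtop X x0) = carrier (fundamental_group X x0)"
  unfolding pi1_qtop_def
  by (rule topspace_quot) (auto simp: topspace_loop_space fundamental_group_def)

lemma openin_qtop: "openin (pi1_qtop X x0) U \<longleftrightarrow>
   U \<subseteq> carrier (fundamental_group X x0) \<and>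
   openin (loop_space X x0) {z \<in> loop_space_set X x0. pclass X x0 z \<in> U}"
  unfolding pi1_qtop_def openin_quot topspace_loop_space ..

abbreviation "GG \<equiv> fundamental_group X x0"
abbreviation "FF \<equiv> free_group (carrier (fundamental_group X x0))"

lemma topspace_FM: "topspace (free_top_group_topology (pi1_qtop X x0)) = carrier FF"
  and cont_gen: "continuous_map (pi1_qtop X x0) (free_top_group_topology (pi1_qtop X x0)) (\<lambda>s. [(s, True)])"
proof -
  let ?SS = "\<Union>{{U. openin T U} | T.
         group_topology (free_group (topspace (pi1_qtop X x0))) T \<and>
         continuous_map (pi1_qtop X x0) T (\<lambda>s. [(s, True)])}"
  have grp: "group FF" by (rule group_free_group)
  have gen: "(\<lambda>s. [(s, True)]) ` carrier GG \<subseteq> carrier FF"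
    by (auto simp: free_group_def word_reduce.simps(2))
  have "group_topology FF (indisc (carrier FF))"
    unfolding group_topology_def topspace_indisc continuous_map_indisc
    using monoid.m_closed[OF group.is_monoid[OF grp]] group.inv_closed[OF grp]
    by (auto simp: topspace_indisc)
  moreover have "continuous_map (pi1_qtop X x0) (indisc (carrier FF)) (\<lambda>s. [(s, True)])"
    unfolding continuous_map_indisc topspace_qtop using gen .
  ultimately have "carrier FF \<in> ?SS"
    unfolding topspace_qtop by (blast intro: openin_indisc[THEN iffD2])
  moreover have "U \<subseteq> carrier FF" if "U \<in> ?SS" for U
    using that unfolding topspace_qtop group_topology_def by (auto dest: openin_subset)
  ultimately have ts: "\<Union>?SS = carrier FF" by blast
  then show "topspace (free_top_group_topology (pi1_qtop X x0)) = carrier FF"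
    unfolding free_top_group_topology_def topology_generated_by_topspace by simp
  show "continuous_map (pi1_qtop X x0) (free_top_group_topology (pi1_qtop X x0)) (\<lambda>s. [(s, True)])"
    unfolding free_top_group_topology_def continuous_on_generated_topo_iff
  proof (intro conjI allI impI)
    fix U assume "U \<in> ?SS"
    then obtain T where T: "continuous_map (pi1_qtop X x0) T (\<lambda>s. [(s, True)])" "openin T U" by blast
    have "(\<lambda>s. [(s, True)]) -` U \<inter> topspace (pi1_qtop X x0) = {x \<in> topspace (pi1_qtop X x0). [(x, True)] \<in> U}"
      by auto
    then show "openin (pi1_qtop X x0) ((\<lambda>s. [(s, True)]) -` U \<inter> topspace (pi1_qtop X x0))"
      using openin_continuous_map_preimage[OF T] by simp
  next
    show "(\<lambda>s. [(s, True)]) ` topspace (pi1_qtop X x0) \<subseteq> \<Union>?SS"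
      using ts gen by (simp add: topspace_qtop)
  qed
qed

lemma word_eval_closed:
  assumes "fst ` set w \<subseteq> carrier GG"
  shows "word_eval GG w \<in> carrier GG"
  using assms
proof (induction w)
  case Nil then show ?case using monoid.one_closed[OF group.is_monoid[OF group_pi1[OF x0]]] by (simp add: word_eval_def)
next
  case (Cons a w)
  then have "word_eval GG w \<in> carrier GG" "fst a \<in> carrier GG" by auto
  then show ?case using monoid.m_closed[OF group.is_monoid[OF group_pi1[OF x0]]] group.inv_closed[OF group_pi1[OF x0]]
    by (cases a) (auto simp: word_eval_def)
qed

lemma topspace_tau: "topspace (pi1_tau X x0) = carrier GG"
  unfolding pi1_tau_def tau_topology_def
  by (rule topspace_quot) (auto simp: topspace_FM free_group_def topspace_qtop intro!: word_eval_closed)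

lemma openin_tau_loops:
  assumes "openin (pi1_tau X x0) V"
  shows "openin (loop_space X x0) {z \<in> loop_space_set X x0. pclass X x0 z \<in> V}"
proof -
  let ?FM = "free_top_group_topology (pi1_qtop X x0)"
  have V: "V \<subseteq> carrier GG" "openin ?FM {w \<in> carrier FF. word_eval GG w \<in> V}"
    using assms unfolding pi1_tau_def tau_topology_def openin_quot topspace_FM by auto
  have o: "openin (pi1_qtop X x0) {g \<in> topspace (pi1_qtop X x0). [(g, True)] \<in> {w \<in> carrier FF. word_eval GG w \<in> V}}"
    using openin_continuous_map_preimage[OF cont_gen V(2)] .
  have "{g \<in> topspace (pi1_qtop X x0). [(g, True)] \<in> {w \<in> carrier FF. word_eval GG w \<in> V}} = V"
  proof -
    have "word_eval GG [(g, True)] = g" if "g \<in> carrier GG" for g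
      using monoid.r_one[OF group.is_monoid[OF group_pi1[OF x0]] that] by (simp add: word_eval_def)
    then show ?thesis using V(1)
      by (auto simp: topspace_qtop free_group_def word_reduce.simps(2))
  qed
  then show ?thesis using o by (simp add: openin_qtop)
qed

end

lemma generate_nbhd:
  assumes "generate_topology_on S W"
  shows "\<forall>x\<in>W. \<exists>F. finite F \<and> F \<subseteq> S \<and> F \<noteq> {} \<and> x \<in> \<Inter>F \<and> \<Inter>F \<subseteq> W"
  using assms
proof (induction rule: generate_topology_on.induct)
  case Empty then show ?case by simp
next
  case (Int a b)
  show ?case
  proof
    fix x assume x: "x \<in> a \<inter> b"
    then have xa: "x \<in> a" and xb: "x \<in> b" by simp_all
    obtain F1 where F1: "finite F1 \<and> F1 \<subseteq> S \<and> F1 \<noteq> {} \<and> x \<in> \<Inter>F1 \<and> \<Inter>F1 \<subseteq> a"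
      using bspec[OF Int.IH(1) xa] by (elim exE)
    obtain F2 where F2: "finite F2 \<and> F2 \<subseteq> S \<and> F2 \<noteq> {} \<and> x \<in> \<Inter>F2 \<and> \<Inter>F2 \<subseteq> b"
      using bspec[OF Int.IH(2) xb] by (elim exE)
    have "finite (F1 \<union> F2) \<and> F1 \<union> F2 \<subseteq> S \<and> F1 \<union> F2 \<noteq> {} \<and> x \<in> \<Inter>(F1 \<union> F2) \<and> \<Inter>(F1 \<union> F2) \<subseteq> a \<inter> b"
      using F1 F2 by blast
    then show "\<exists>F. finite F \<and> F \<subseteq> S \<and> F \<noteq> {} \<and> x \<in> \<Inter>F \<and> \<Inter>F \<subseteq> a \<inter> b"
      by (rule exI)
  qed
next
  case (UN K)
  show ?case
  proof
    fix x assume "x \<in> \<Union>K"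
    then obtain k where k: "k \<in> K" "x \<in> k" by blast
    obtain F where F: "finite F \<and> F \<subseteq> S \<and> F \<noteq> {} \<and> x \<in> \<Inter>F \<and> \<Inter>F \<subseteq> k"
      using bspec[OF UN.IH[OF k(1)] k(2)] by (elim exE)
    have "finite F \<and> F \<subseteq> S \<and> F \<noteq> {} \<and> x \<in> \<Inter>F \<and> \<Inter>F \<subseteq> \<Union>K"
      using F k(1) by blast
    then show "\<exists>F. finite F \<and> F \<subseteq> S \<and> F \<noteq> {} \<and> x \<in> \<Inter>F \<and> \<Inter>F \<subseteq> \<Union>K"
      by (rule exI)
  qed
next
  case (Basis s)
  show ?case
  proof
    fix x assume "x \<in> s"
    then have "finite {s} \<and> {s} \<subseteq> S \<and> {s} \<noteq> {} \<and> x \<in> \<Inter>{s} \<and> \<Inter>{s} \<subseteq> s"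
      using Basis by simp
    then show "\<exists>F. finite F \<and> F \<subseteq> S \<and> F \<noteq> {} \<and> x \<in> \<Inter>F \<and> \<Inter>F \<subseteq> s" by (rule exI)
  qed
qed

lemma find_i:
  fixes k :: nat and s :: real
  assumes "1 \<le> k" "0 \<le> s" "s \<le> 1"
  shows "\<exists>i\<in>{1..k}. real (i - 1) / real k \<le> s \<and> s \<le> real i / real k"
proof -
  have kpos: "real k > 0" using assms by simp
  define c where "c = \<lceil>s * real k\<rceil>"
  have cc: "of_int c - 1 < s * real k" "s * real k \<le> of_int c"
    using ceiling_correct[of "s * real k"] unfolding c_def by auto
  have sk: "0 \<le> s * real k" using assms by simp
  have c0: "c \<ge> 0" using cc sk by linarith
  define j where "j = nat c"
  have rj: "real j = of_int c" unfolding j_def using c0 by simp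
  have j1: "real j \<ge> s * real k" using cc rj by simp
  have j2: "real j < s * real k + 1" using cc rj by simp
  have j3: "j \<le> k"
  proof -
    have "s * real k \<le> real k" using assms kpos by (simp add: mult_left_le_one_le)
    then have "real j < real k + 1" using j2 by simp
    then show ?thesis by simp
  qed
  show ?thesis
  proof (cases "j = 0")
    case True
    then have "s * real k \<le> 0" using j1 by simp
    then have "s = 0" using assms kpos by (simp add: mult_le_0_iff)
    then show ?thesis using assms kpos by (intro bexI[of _ 1]) auto
  next
    case False
    have "real (j - 1) = real j - 1" using False by simp
    then have "real (j - 1) \<le> s * real k" using j2 by simp
    then have a: "real (j - 1) / real k \<le> s" using kpos by (simp add: divide_le_eq)
    have b: "s \<le> real j / real k" using j1 kpos by (simp add: le_divide_eq)
    show ?thesis using a b False j3 by (intro bexI[of _ j]) auto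
  qed
qed

definition Lf :: "(real \<Rightarrow> 'a) \<Rightarrow> (real \<Rightarrow> 'a) \<Rightarrow> (real \<Rightarrow> 'a) \<Rightarrow> real \<Rightarrow> 'a" where
  "Lf d g b = path_concat d (path_concat g (path_concat (prev b) (prev d)))"

lemma Lf_out:
  assumes "t \<notin> {1/2<..3/4}" shows "Lf d g b t = Lf d a b t"
proof (cases "t \<le> 1/2")
  case True then show ?thesis by (simp add: Lf_def path_concat_def)
next
  case False
  then have "\<not> (2 * t - 1 \<le> 1/2)" using assms by auto
  then show ?thesis using False by (simp add: Lf_def path_concat_def)
qed

lemma Lf_in:
  assumes "t \<in> {1/2..3/4}" "d 1 = g 0"
  shows "Lf d g b t = g (4 * t - 2)"
proof (cases "t = 1/2")
  case True
  have "Lf d g b (1/2) = d 1" by (simp add: Lf_def path_concat_def)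
  moreover have "g (4 * (1/2) - 2) = g 0" by simp
  ultimately show ?thesis unfolding True using assms(2) by simp
next
  case False
  then have "t > 1/2" "2 * t - 1 \<le> 1/2" using assms by auto
  moreover have "2 * (2 * t - 1) = 4 * t - 2" by simp
  ultimately show ?thesis by (simp add: Lf_def path_concat_def)
qed

lemma ex3I: "P k t U \<Longrightarrow> \<exists>k t U. P k t U" by blast

theorem proposition3p22:
  fixes X :: "'a topology" and x0 :: 'a
  assumes pc: "path_connected_space X"
    and x0: "x0 \<in> topspace X"
    and H: "Hausdorff_space (pi1_tau X x0)"
  shows "homotopically_path_Hausdorff X"
  unfolding homotopically_path_Hausdorff_def
proof (intro allI impI)
  fix \<alpha> \<beta> :: "real \<Rightarrow> 'a"
  assume "pathin X \<alpha> \<and> pathin X \<beta> \<and> \<alpha> 0 = \<beta> 0 \<and> \<alpha> 1 = \<beta> 1 \<and> \<not> phomotopic X \<alpha> \<beta>"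
  then have pa: "pathin X \<alpha>" and pb: "pathin X \<beta>" and e0: "\<alpha> 0 = \<beta> 0" and e1: "\<alpha> 1 = \<beta> 1"
    and nh: "\<not> phomotopic X \<alpha> \<beta>" by auto
  have "\<alpha> ` {0..1} \<subseteq> topspace X"
    using continuous_map_image_subset_topspace[OF pa[unfolded pathin_def]] by simp
  then have a0: "\<alpha> 0 \<in> topspace X" by auto
  obtain \<delta> where pd: "pathin X \<delta>" and d0: "\<delta> 0 = x0" and d1: "\<delta> 1 = \<alpha> 0"
    using pc x0 a0 unfolding path_connected_space_def by blast
  define L where "L = Lf \<delta> \<alpha> \<beta>"
  have grp: "group (fundamental_group X x0)" by (rule group_pi1[OF x0])
  have Lloop: "Lf \<delta> \<gamma> \<beta> \<in> loop_space_set X x0"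
    if g: "pathin X \<gamma>" "\<gamma> 0 = \<alpha> 0" "\<gamma> 1 = \<beta> 1" for \<gamma>
  proof -
    have R: "pathin X (path_concat (prev \<beta>) (prev \<delta>))"
      using pathin_concat[OF pathin_prev[OF pb] pathin_prev[OF pd]] d1 e0 by simp
    have gR: "pathin X (path_concat \<gamma> (path_concat (prev \<beta>) (prev \<delta>)))"
      using pathin_concat[OF g(1) R] g by simp
    have "pathin X (Lf \<delta> \<gamma> \<beta>)"
      unfolding Lf_def using pathin_concat[OF pd gR] d1 g by simp
    then show ?thesis unfolding loop_space_set_def Lf_def using d0 by simp
  qed
  have Lnn: "\<not> phomotopic X L (\<lambda>t. x0)"
  proof
    assume "phomotopic X L (\<lambda>t. x0)"
    then have "phomotopic X (path_concat \<delta> (path_concat \<alpha> (path_concat (prev \<beta>) (prev \<delta>)))) (\<lambda>t. \<delta> 0)"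
      unfolding L_def Lf_def d0 .
    then have "phomotopic X \<alpha> \<beta>"
      using claim_nonnull[OF pd pa pb] d1 e0 e1 by simp
    then show False using nh by simp
  qed
  have Lin: "L \<in> loop_space_set X x0" unfolding L_def using Lloop[OF pa refl e1] .
  have cin: "(\<lambda>t. x0) \<in> loop_space_set X x0" using loop_const[OF x0] .
  define one where "one = pclass X x0 (\<lambda>t. x0)"
  have gne: "pclass X x0 L \<noteq> one"
  proof
    assume "pclass X x0 L = one"
    then have "L \<in> pclass X x0 (\<lambda>t. x0)" using pclass_self[OF Lin] unfolding one_def by simp
    then have "phomotopic X (\<lambda>t. x0) L" by (simp add: pclass_def)
    then show False using Lnn phom_sym by blast
  qed
  have gc: "pclass X x0 L \<in> topspace (pi1_tau X x0)"
    using Lin by (simp add: topspace_tau[OF x0] fundamental_group_def)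
  have oc: "one \<in> topspace (pi1_tau X x0)"
    using cin by (simp add: topspace_tau[OF x0] fundamental_group_def one_def)
  obtain V W where VW: "openin (pi1_tau X x0) V" "openin (pi1_tau X x0) W"
    "pclass X x0 L \<in> V" "one \<in> W" "disjnt V W"
    using H gc oc gne unfolding Hausdorff_space_def by blast
  have oneV: "one \<notin> V" using VW(4,5) by (auto simp: disjnt_def)
  define Oset where "Oset = {z \<in> loop_space_set X x0. pclass X x0 z \<in> V}"
  have Oo: "openin (loop_space X x0) Oset" unfolding Oset_def by (rule openin_tau_loops[OF x0 VW(1)])
  have LO: "L \<in> Oset" unfolding Oset_def using Lin VW(3) by simp
  let ?B = "{{a \<in> loop_space_set X x0. a ` K \<subseteq> U} | K U.
        compactin (top_of_set {0..1}) K \<and> openin X U}"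
  have gen: "generate_topology_on ?B Oset" using Oo unfolding loop_space_def
    by (simp add: openin_topology_generated_by_iff)
  from bspec[OF generate_nbhd[OF gen] LO]
  obtain FF where FF0: "finite FF \<and> FF \<subseteq> ?B \<and> FF \<noteq> {} \<and> L \<in> \<Inter>FF \<and> \<Inter>FF \<subseteq> Oset"
    by (elim exE)
  then have FF: "finite FF" "FF \<subseteq> ?B" "FF \<noteq> {}" "L \<in> \<Inter>FF" "\<Inter>FF \<subseteq> Oset" by simp_all
  have "\<forall>Bs\<in>FF. \<exists>K. \<exists>U. Bs = {a \<in> loop_space_set X x0. a ` K \<subseteq> U} \<and>
        compactin (top_of_set {0..1}) K \<and> openin X U"
  proof
    fix Bs assume "Bs \<in> FF"
    then have "Bs \<in> ?B" by (rule subsetD[OF FF(2)])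
    then show "\<exists>K. \<exists>U. Bs = {a \<in> loop_space_set X x0. a ` K \<subseteq> U} \<and>
        compactin (top_of_set {0..1}) K \<and> openin X U" by (simp only: mem_Collect_eq)
  qed
  then have "\<exists>\<kappa>. \<forall>Bs\<in>FF. \<exists>U. Bs = {a \<in> loop_space_set X x0. a ` \<kappa> Bs \<subseteq> U} \<and>
        compactin (top_of_set {0..1}) (\<kappa> Bs) \<and> openin X U" by (rule bchoice)
  then obtain \<kappa> where "\<forall>Bs\<in>FF. \<exists>U. Bs = {a \<in> loop_space_set X x0. a ` \<kappa> Bs \<subseteq> U} \<and>
        compactin (top_of_set {0..1}) (\<kappa> Bs) \<and> openin X U" by (elim exE)
  then have "\<exists>\<upsilon>. \<forall>Bs\<in>FF. Bs = {a \<in> loop_space_set X x0. a ` \<kappa> Bs \<subseteq> \<upsilon> Bs} \<and>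
        compactin (top_of_set {0..1}) (\<kappa> Bs) \<and> openin X (\<upsilon> Bs)" by (rule bchoice)
  then obtain \<upsilon> where ku: "\<forall>Bs\<in>FF. Bs = {a \<in> loop_space_set X x0. a ` \<kappa> Bs \<subseteq> \<upsilon> Bs} \<and>
        compactin (top_of_set {0..1}) (\<kappa> Bs) \<and> openin X (\<upsilon> Bs)" by (elim exE)
  have kuE: "Bs = {a \<in> loop_space_set X x0. a ` \<kappa> Bs \<subseteq> \<upsilon> Bs}" if "Bs \<in> FF" for Bs
    using bspec[OF ku that] by (elim conjE)
  have kuC: "compactin (top_of_set {0..1}) (\<kappa> Bs)" if "Bs \<in> FF" for Bs
    using bspec[OF ku that] by (elim conjE)
  have kuO: "openin X (\<upsilon> Bs)" if "Bs \<in> FF" for Bs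
    using bspec[OF ku that] by (elim conjE)
  have KP: "M \<in> Oset" if "M \<in> loop_space_set X x0" "\<forall>Bs\<in>FF. M ` \<kappa> Bs \<subseteq> \<upsilon> Bs" for M
  proof -
    have "M \<in> \<Inter>FF"
    proof
      fix Bs assume Bs: "Bs \<in> FF"
      have "M \<in> {a \<in> loop_space_set X x0. a ` \<kappa> Bs \<subseteq> \<upsilon> Bs}" using that Bs by simp
      then show "M \<in> Bs" using kuE[OF Bs] by simp
    qed
    then show ?thesis using FF(5) by blast
  qed
  have LK: "L ` \<kappa> Bs \<subseteq> \<upsilon> Bs" if "Bs \<in> FF" for Bs
  proof -
    have "L \<in> Bs" using FF(4) that by blast
    then have "L \<in> {a \<in> loop_space_set X x0. a ` \<kappa> Bs \<subseteq> \<upsilon> Bs}" using kuE[OF that] by simp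
    then show ?thesis by simp
  qed
  have ksub: "\<kappa> Bs \<subseteq> {0..1}" "compact (\<kappa> Bs)" if "Bs \<in> FF" for Bs
    using kuC[OF that] by (simp_all add: compactin_subtopology)
  define C where "C = (\<lambda>Bs. (\<lambda>t. 4 * t - 2) ` (\<kappa> Bs \<inter> {1/2..3/4}))"
  have Ccomp: "compact (C Bs)" if "Bs \<in> FF" for Bs
    unfolding C_def
    by (intro compact_continuous_image compact_Int_closed ksub(2)[OF that] continuous_intros closed_atLeastAtMost)
  have Cprop: "s \<in> {0..1} \<and> \<alpha> s \<in> \<upsilon> Bs" if BsF: "Bs \<in> FF" and sC: "s \<in> C Bs" for Bs s
  proof -
    obtain t where t: "t \<in> \<kappa> Bs" "t \<in> {1/2..3/4}" "s = 4 * t - 2"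
      using sC unfolding C_def by blast
    have "L t \<in> \<upsilon> Bs" using LK[OF BsF] t(1) by blast
    moreover have "L t = \<alpha> (4 * t - 2)" unfolding L_def by (rule Lf_in[of t \<delta> \<alpha> \<beta>, OF t(2) d1])
    ultimately show ?thesis using t(2,3) by auto
  qed
  have "\<exists>e>0. \<forall>s\<in>{0..1}. (\<exists>c\<in>C Bs. dist c s < e) \<longrightarrow> \<alpha> s \<in> \<upsilon> Bs" if Bs: "Bs \<in> FF" for Bs
  proof -
    have "openin (top_of_set {0..1}) {s \<in> topspace (top_of_set {0..1}). \<alpha> s \<in> \<upsilon> Bs}"
      using openin_continuous_map_preimage[OF pa[unfolded pathin_def] kuO[OF Bs]] .
    then have "openin (top_of_set {0..1}) {s \<in> {0..1}. \<alpha> s \<in> \<upsilon> Bs}" by simp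
    then have "\<exists>T. openin euclidean T \<and> {s \<in> {0..1}. \<alpha> s \<in> \<upsilon> Bs} = T \<inter> {0..1}"
      by (simp only: openin_subtopology)
    then obtain T where T0: "openin euclidean T" and T: "{s \<in> {0..1}. \<alpha> s \<in> \<upsilon> Bs} = T \<inter> {0..1}"
      by (elim exE conjE)
    have To: "open T" using T0 by (simp only: open_openin)
    have CT: "C Bs \<subseteq> T"
    proof
      fix s assume "s \<in> C Bs"
      then have "s \<in> {s \<in> {0..1}. \<alpha> s \<in> \<upsilon> Bs}" using Cprop[OF Bs] by simp
      then show "s \<in> T" unfolding T by simp
    qed
    obtain e where e: "e > 0" "(\<Union>c\<in>C Bs. ball c e) \<subseteq> T"
      using compact_subset_open_imp_ball_epsilon_subset[OF Ccomp[OF Bs] To CT] by blast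
    have "\<alpha> s \<in> \<upsilon> Bs" if s01: "s \<in> {0..1}" and cC: "c \<in> C Bs" and dcs: "dist c s < e" for s c
    proof -
      have "s \<in> ball c e" using dcs by simp
      then have "s \<in> (\<Union>c\<in>C Bs. ball c e)" using cC by blast
      then have "s \<in> T" using e(2) by (rule subsetD[rotated])
      then have "s \<in> {s \<in> {0..1}. \<alpha> s \<in> \<upsilon> Bs}" unfolding T using s01 by simp
      then show ?thesis by simp
    qed
    then show ?thesis using e(1) by blast
  qed
  then have "\<forall>Bs\<in>FF. \<exists>e. e > 0 \<and> (\<forall>s\<in>{0..1}. (\<exists>c\<in>C Bs. dist c s < e) \<longrightarrow> \<alpha> s \<in> \<upsilon> Bs)"
    by blast
  then have "\<exists>\<epsilon>. \<forall>Bs\<in>FF. \<epsilon> Bs > 0 \<and> (\<forall>s\<in>{0..1}. (\<exists>c\<in>C Bs. dist c s < \<epsilon> Bs) \<longrightarrow> \<alpha> s \<in> \<upsilon> Bs)"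
    by (rule bchoice)
  then obtain \<epsilon> where eps: "\<forall>Bs\<in>FF. \<epsilon> Bs > 0 \<and> (\<forall>s\<in>{0..1}. (\<exists>c\<in>C Bs. dist c s < \<epsilon> Bs) \<longrightarrow> \<alpha> s \<in> \<upsilon> Bs)"
    by (elim exE)
  define e0 where "e0 = Min (\<epsilon> ` FF)"
  have e0pos: "e0 > 0" unfolding e0_def using FF(1,3) eps by (simp add: Min_gr_iff)
  have e0le: "e0 \<le> \<epsilon> Bs" if "Bs \<in> FF" for Bs unfolding e0_def using FF(1) that by simp
  obtain n where n: "inverse (real (Suc n)) < e0" using reals_Archimedean[OF e0pos] by blast
  define k where "k = Suc n"
  have k1: "1 \<le> k" unfolding k_def by simp
  have kpos: "real k > 0" unfolding k_def by simp
  have ke: "1 / real k < e0" using n unfolding k_def by (simp add: inverse_eq_divide)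
  define tt where "tt = (\<lambda>i::nat. real i / real k)"
  define U where "U = (\<lambda>i. \<Inter>(insert (topspace X) (\<upsilon> ` {Bs \<in> FF. \<exists>c\<in>C Bs. tt (i - 1) \<le> c \<and> c \<le> tt i})))"
  have tt_int: "0 \<le> tt (i - 1)" "tt i \<le> 1" "tt i - tt (i - 1) = 1 / real k" if "i \<in> {1..k}" for i
  proof -
    show "0 \<le> tt (i - 1)" unfolding tt_def by simp
    show "tt i \<le> 1" unfolding tt_def using that kpos by (simp add: divide_le_eq)
    have "real (i - 1) = real i - 1" using that by auto
    then show "tt i - tt (i - 1) = 1 / real k" unfolding tt_def by (simp add: diff_divide_distrib)
  qed
  have Usub: "U i \<subseteq> \<upsilon> Bs" if "Bs \<in> FF" "c \<in> C Bs" "tt (i - 1) \<le> c" "c \<le> tt i" for i Bs c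
    unfolding U_def using that by blast
  have main: "1 \<le> k \<and> tt 0 = 0 \<and> tt k = 1 \<and>
         (\<forall>i\<in>{1..k}. tt (i - 1) < tt i \<and> openin X (U i) \<and> \<alpha> ` {tt (i - 1)..tt i} \<subseteq> U i) \<and>
         (\<forall>\<gamma>. pathin X \<gamma> \<and> (\<forall>i\<le>k. \<gamma> (tt i) = \<alpha> (tt i)) \<and>
                (\<forall>i\<in>{1..k}. \<gamma> ` {tt (i - 1)..tt i} \<subseteq> U i)
              \<longrightarrow> \<not> phomotopic X \<gamma> \<beta>)"
  proof (intro conjI ballI allI impI)
    show "1 \<le> k" by (rule k1)
    show "tt 0 = 0" unfolding tt_def by simp
    show "tt k = 1" unfolding tt_def using kpos by simp
  next
    fix i assume i: "i \<in> {1..k}"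
    have "0 < 1 / real k" using kpos by simp
    then show "tt (i - 1) < tt i" using tt_int(3)[OF i] by linarith
    have "finite (insert (topspace X) (\<upsilon> ` {Bs \<in> FF. \<exists>c\<in>C Bs. tt (i - 1) \<le> c \<and> c \<le> tt i}))"
      using FF(1) by simp
    moreover have "\<forall>S\<in>insert (topspace X) (\<upsilon> ` {Bs \<in> FF. \<exists>c\<in>C Bs. tt (i - 1) \<le> c \<and> c \<le> tt i}). openin X S"
      using kuO by blast
    ultimately show "openin X (U i)" unfolding U_def by (intro openin_Inter) auto
    show "\<alpha> ` {tt (i - 1)..tt i} \<subseteq> U i"
    proof
      fix y assume "y \<in> \<alpha> ` {tt (i - 1)..tt i}"
      then obtain s where s: "s \<in> {tt (i - 1)..tt i}" "y = \<alpha> s" by blast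
      have s01: "s \<in> {0..1}" using s(1) tt_int[OF i] by auto
      have "y \<in> topspace X" using s(2) s01 \<open>\<alpha> ` {0..1} \<subseteq> topspace X\<close> by blast
      moreover have "y \<in> \<upsilon> Bs" if "Bs \<in> FF" "c \<in> C Bs" "tt (i - 1) \<le> c" "c \<le> tt i" for Bs c
      proof -
        have "dist c s \<le> tt i - tt (i - 1)" using that(3,4) s(1) by (auto simp: dist_real_def)
        also have "\<dots> < \<epsilon> Bs" using tt_int(3)[OF i] ke e0le[OF that(1)] by simp
        finally have "dist c s < \<epsilon> Bs" .
        then have "\<exists>c\<in>C Bs. dist c s < \<epsilon> Bs" using that(2) by blast
        moreover have "\<forall>s\<in>{0..1}. (\<exists>c\<in>C Bs. dist c s < \<epsilon> Bs) \<longrightarrow> \<alpha> s \<in> \<upsilon> Bs"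
          using bspec[OF eps that(1)] by (rule conjunct2)
        ultimately show ?thesis using s01 s(2) by blast
      qed
      ultimately show "y \<in> U i" unfolding U_def by blast
    qed
  next
    fix \<gamma> assume "pathin X \<gamma> \<and> (\<forall>i\<le>k. \<gamma> (tt i) = \<alpha> (tt i)) \<and>
                (\<forall>i\<in>{1..k}. \<gamma> ` {tt (i - 1)..tt i} \<subseteq> U i)"
    then have pg: "pathin X \<gamma>" and gt: "\<forall>i\<le>k. \<gamma> (tt i) = \<alpha> (tt i)"
      and gU: "\<forall>i\<in>{1..k}. \<gamma> ` {tt (i - 1)..tt i} \<subseteq> U i" by auto
    have g0: "\<gamma> 0 = \<alpha> 0" using gt[rule_format, of 0] unfolding tt_def by simp
    have g1: "\<gamma> 1 = \<alpha> 1" using gt[rule_format, of k] kpos unfolding tt_def by simp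
    show "\<not> phomotopic X \<gamma> \<beta>"
    proof
      assume hg: "phomotopic X \<gamma> \<beta>"
      have Lg: "Lf \<delta> \<gamma> \<beta> \<in> loop_space_set X x0" using Lloop[OF pg g0] g1 e1 by simp
      have "phomotopic X (path_concat \<delta> (path_concat \<gamma> (path_concat (prev \<beta>) (prev \<delta>)))) (\<lambda>t. \<delta> 0)"
        using claim_null[OF pd pg pb] d1 e0 e1 g0 g1 hg by simp
      then have "phomotopic X (Lf \<delta> \<gamma> \<beta>) (\<lambda>t. x0)" unfolding Lf_def d0 .
      then have pcg: "pclass X x0 (Lf \<delta> \<gamma> \<beta>) = one" unfolding one_def by (rule pclass_eq)
      have "Lf \<delta> \<gamma> \<beta> \<in> Oset"
      proof (rule KP[OF Lg], intro ballI subsetI)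
        fix Bs y assume Bs: "Bs \<in> FF" and "y \<in> Lf \<delta> \<gamma> \<beta> ` \<kappa> Bs"
        then obtain t where t: "t \<in> \<kappa> Bs" "y = Lf \<delta> \<gamma> \<beta> t" by blast
        show "y \<in> \<upsilon> Bs"
        proof (cases "t \<in> {1/2<..3/4}")
          case True
          then have t2: "t \<in> {1/2..3/4}" by auto
          define s where "s = 4 * t - 2"
          have sC: "s \<in> C Bs" unfolding C_def s_def using t(1) t2 by blast
          have s01: "0 \<le> s" "s \<le> 1" using t2 unfolding s_def by auto
          obtain i where i: "i \<in> {1..k}" "real (i - 1) / real k \<le> s" "s \<le> real i / real k"
            using find_i[OF k1 s01] by blast
          have "s \<in> {tt (i - 1)..tt i}" using i(2,3) unfolding tt_def by simp
          then have "\<gamma> s \<in> \<gamma> ` {tt (i - 1)..tt i}" by (rule imageI)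
          then have "\<gamma> s \<in> U i" using bspec[OF gU i(1)] by (rule subsetD[rotated])
          moreover have "U i \<subseteq> \<upsilon> Bs"
            using Usub[OF Bs sC, of i] \<open>s \<in> {tt (i - 1)..tt i}\<close> by simp
          moreover have dg: "\<delta> 1 = \<gamma> 0" using d1 g0 by simp
          moreover have "y = \<gamma> s" unfolding t(2) s_def by (rule Lf_in[of t \<delta> \<gamma> \<beta>, OF t2 dg])
          ultimately show ?thesis by blast
        next
          case False
          have "Lf \<delta> \<gamma> \<beta> t = Lf \<delta> \<alpha> \<beta> t" by (rule Lf_out[OF False])
          then have "y = L t" unfolding t(2) L_def .
          then show ?thesis using LK[OF Bs] t(1) by blast
        qed
      qed
      then have "pclass X x0 (Lf \<delta> \<gamma> \<beta>) \<in> V" unfolding Oset_def by simp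
      then show False using pcg oneV by simp
    qed
  qed
  show "\<exists>(k::nat) tt U. 1 \<le> k \<and> tt 0 = 0 \<and> tt k = 1 \<and>
         (\<forall>i\<in>{1..k}. tt (i - 1) < tt i \<and> openin X (U i) \<and> \<alpha> ` {tt (i - 1)..tt i} \<subseteq> U i) \<and>
         (\<forall>\<gamma>. pathin X \<gamma> \<and> (\<forall>i\<le>k. \<gamma> (tt i) = \<alpha> (tt i)) \<and>
                (\<forall>i\<in>{1..k}. \<gamma> ` {tt (i - 1)..tt i} \<subseteq> U i)
              \<longrightarrow> \<not> phomotopic X \<gamma> \<beta>)"
    by (rule ex3I[where k=k and t=tt and U=U]) (rule main)
qed

end
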